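(* Let $T$ be a rhombic alternative tableau of type $X\in B_n^r$ with tiling $\mathcal{T}$, and run the label-passing algorithm on $T$. Suppose that a label $J$ is passed along the line of a north-strip $\mathbf{n}$ southward out of a tile $\mathbf{t}$ of $\mathbf{n}$, and that no tile of $\mathbf{n}$ below $\mathbf{t}$ contains an $\alpha$. Then at the completion of the algorithm, the southeast boundary edge (external vertex) of $\mathbf{n}$ carries the label $\{J_{\max}\}$, where $J_{\max}=\max J$.
   Context: Words and diagrams. For $0\le r\le n$ let $B_n^r$ be the set of words $X\in\{H,L,0\}^n$ with exactly $r$ letters $L$. If $X$ has $k$ letters $H$, $r$ letters $L$ and $\ell$ letters $0$, its rhombic diagram $\Gamma(X)$ is the closed region bounded by two paths of unit steps, using the directions west (horizontal), south (vertical) and southwest (diagonal: a fixed unit vector strictly between west and south), both going from a point $P$ to a point $Q$: the northwest boundary consists of $\ell$ west steps, then $r$ southwest steps, then $k$ south steps; the southeast boundary is obtained by reading $X$ left to right and taking a west step for each $0$, a southwest step for each $L$, a south step for each $H$. A tiling of $\Gamma(X)$ is a tiling by unit rhombi of three kinds: squares (horizontal and vertical edges), tall rhombi (vertical and diagonal edges), short rhombi (horizontal and diagonal edges). A west-strip (resp. north-strip, northwest-strip) is a maximal set of tiles connected through shared vertical (resp. horizontal, diagonal) edges; each runs from an edge of the southeast boundary to an edge of the northwest boundary. Rhombic alternative tableaux. A rhombic alternative tableau (RAT) of type $X$ with tiling $\mathcal{T}$ is a filling of the tiles of $\mathcal{T}$, each tile empty or containing one of $\alpha,\beta,q$, where $\alpha$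 occurs only in squares and short rhombi and $\beta$ only in squares and tall rhombi, such that: (i) every tile in the same west-strip as a tile containing $\beta$ and to its left is empty; (ii) every tile in the same north-strip as a tile containing $\alpha$ and above it is empty; (iii) every tile not forced to be empty by (i),(ii) contains $\alpha$, $\beta$ or $q$. Label-passing algorithm. A label is a finite set of consecutive integers; for labels $C,D$ write $D\succ C$ if both are nonempty and $\min D=\max C+1$. Given a RAT $T$: through each west-strip draw a line through the midpoints of its vertical edges, through each north-strip a line through midpoints of its horizontal edges, and through each northwest-strip a line through midpoints of its diagonal edges (all passing through the tile centres). For every tile containing $\alpha$ erase the part of its north-strip line above the tile's centre; for every tile containing $\beta$ erase the part of its west-strip line to the left of the tile's centre. This yields a forest of binary trees whose branching vertices are the centres of tiles containing $\alpha$ or $\beta$, whose leaves (external vertices) are the southeast boundary edges and whose roots are northwest boundary edges; roots are red/green/blue according as they lie on a west-/northwest-/north-strip. Add a special trivial green root at $Q$ with one fictitious leaf. Order the roots: red roots from top to bottom, then green roots (starting with the special one) from southwest to northeast, then blue roots from left to right. Label the roots so that each root label has as many elements as its tree has leaves (one for the special root), each root's label is $\succ$ the label of the preceding root, and the union of all root labels is $\{1,\dots,n+1\}$. Labels are then passed from the roots towards the leaves (southeastward) along branches, unchanged along branches; when a label $B$ reaches a branching vertex $v$ it is split as $B=C\cup D$ with $D\succ C$, each of the two outgoing branches getting a label of size equal to its number of leaves, according to: (I) if $v$ lies in a rhombus (tall or short), $D$ goes to the outgoing branch along the northwest-strip; (II) if $v$ lies in a square containing $\alpha$, $D$ goes to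 the branch leaving eastward and $C$ to the branch leaving southward; (III) if $v$ lies in a square containing $\beta$, $D$ goes to the branch leaving southward and $C$ to the branch leaving eastward. At completion every southeast boundary edge carries a singleton label. *)

theory Defs
  imports Main
begin

text \<open>Letters H, L, 0 (the letter 0 is written Z).\<close>
datatype letter = H | L | Z

definition B :: "nat \<Rightarrow> nat \<Rightarrow> letter list set" where
  "B n r = {X. length X = n \<and> length (filter (\<lambda>c. c = L) X) = r}"

text \<open>Order of the step directions along the northwest boundary:
  west (0) first, then southwest (L), then south (H).\<close>
fun rk :: "letter \<Rightarrow> nat" where
  "rk Z = 0" | "rk L = 1" | "rk H = 2"

text \<open>Strips are identified with the positions 0..n-1 of the southeast boundary
  word X (strip s starts at the s-th southeast boundary edge; its letter is X!s:
  H = west-strip, L = northwest-strip, Z = north-strip).  A tiling is encoded by a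
  sequence of elementary moves sweeping the southeast boundary path to the
  northwest boundary path: the path at stage j is a list of strips, and move j
  replaces two consecutive edges (positions i, i+1, i = sw!j) read from P to Q by
  the same two edges in the other order, which adds the rhombus (tile) j spanned
  by them on the northwest side.  Tile j belongs to exactly the two strips that
  are swapped; along a strip, tiles with smaller index are further southeast.\<close>

definition swap_at :: "nat \<Rightarrow> 'a list \<Rightarrow> 'a list" where
  "swap_at i w = w[i := w ! Suc i, Suc i := w ! i]"

definition path :: "letter list \<Rightarrow> nat list \<Rightarrow> nat \<Rightarrow> nat list" where
  "path X sw j = fold swap_at (take j sw) [0..<length X]"

definition tp :: "letter list \<Rightarrow> nat list \<Rightarrow> nat \<Rightarrow> nat" where
  "tp X sw j = path X sw j ! (sw ! j)"

definition tq :: "letter list \<Rightarrow> nat list \<Rightarrow> nat \<Rightarrow> nat" where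
  "tq X sw j = path X sw j ! Suc (sw ! j)"

definition tile_strips :: "letter list \<Rightarrow> nat list \<Rightarrow> nat \<Rightarrow> nat set" where
  "tile_strips X sw j = {tp X sw j, tq X sw j}"

definition is_tiling :: "letter list \<Rightarrow> nat list \<Rightarrow> bool" where
  "is_tiling X sw \<longleftrightarrow>
     (\<forall>j<length sw. Suc (sw ! j) < length X \<and>
        rk (X ! tp X sw j) > rk (X ! tq X sw j)) \<and>
     sorted (map (\<lambda>s. rk (X ! s)) (path X sw (length sw)))"

datatype cell = Empty | Alpha | Beta | Qc

definition forced_empty :: "letter list \<Rightarrow> nat list \<Rightarrow> (nat \<Rightarrow> cell) \<Rightarrow> nat \<Rightarrow> bool" where
  "forced_empty X sw F j \<longleftrightarrow>
     (\<exists>j'<j. (F j' = Beta \<and> (\<exists>s. s \<in> tile_strips X sw j' \<and> s \<in> tile_strips X sw j \<and> X ! s = H))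
          \<or> (F j' = Alpha \<and> (\<exists>s. s \<in> tile_strips X sw j' \<and> s \<in> tile_strips X sw j \<and> X ! s = Z)))"

definition is_RAT :: "letter list \<Rightarrow> nat list \<Rightarrow> (nat \<Rightarrow> cell) \<Rightarrow> bool" where
  "is_RAT X sw F \<longleftrightarrow> is_tiling X sw \<and>
     (\<forall>j<length sw. F j = Alpha \<longrightarrow> (\<exists>s\<in>tile_strips X sw j. X ! s = Z)) \<and>
     (\<forall>j<length sw. F j = Beta \<longrightarrow> (\<exists>s\<in>tile_strips X sw j. X ! s = H)) \<and>
     (\<forall>j<length sw. F j = Empty \<longleftrightarrow> forced_empty X sw F j)"

definition strip_with :: "letter list \<Rightarrow> nat list \<Rightarrow> nat \<Rightarrow> letter \<Rightarrow> nat" where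
  "strip_with X sw j c = (if X ! tp X sw j = c then tp X sw j else tq X sw j)"

definition other :: "letter list \<Rightarrow> nat list \<Rightarrow> nat \<Rightarrow> nat \<Rightarrow> nat" where
  "other X sw j s = (if s = tp X sw j then tq X sw j else tp X sw j)"

text \<open>Strip whose line is erased on the northwest side of a branching tile.\<close>
definition cutst :: "letter list \<Rightarrow> nat list \<Rightarrow> (nat \<Rightarrow> cell) \<Rightarrow> nat \<Rightarrow> nat" where
  "cutst X sw F j = (if F j = Alpha then strip_with X sw j Z else strip_with X sw j H)"

text \<open>Number of leaves below the edge of strip s on the stage-j path
  (0 if that part of the line is erased).\<close>
primrec lv :: "letter list \<Rightarrow> nat list \<Rightarrow> (nat \<Rightarrow> cell) \<Rightarrow> nat \<Rightarrow> nat \<Rightarrow> nat" where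
  "lv X sw F 0 = (\<lambda>s. 1)"
| "lv X sw F (Suc j) =
     (let f = lv X sw F j; c = cutst X sw F j; ot = other X sw j c in
      if F j = Alpha \<or> F j = Beta then f(ot := f ot + f c, c := 0) else f)"

text \<open>Roots in the prescribed order: red (top to bottom), the special green root
  (None), green (southwest to northeast), blue (left to right).  The final path is
  read from P to Q, i.e. west steps right to left, then southwest steps northeast
  to southwest, then south steps top to bottom.\<close>
definition roots :: "letter list \<Rightarrow> nat list \<Rightarrow> (nat \<Rightarrow> cell) \<Rightarrow> nat option list" where
  "roots X sw F =
     (let w = path X sw (length sw); f = lv X sw F (length sw);
          sel = (\<lambda>c. filter (\<lambda>s. X ! s = c \<and> f s > 0) w) in
      map Some (sel H) @ [None] @ map Some (rev (sel L)) @ map Some (rev (sel Z)))"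

definition root_size :: "letter list \<Rightarrow> nat list \<Rightarrow> (nat \<Rightarrow> cell) \<Rightarrow> nat option \<Rightarrow> nat" where
  "root_size X sw F x = (case x of None \<Rightarrow> 1 | Some s \<Rightarrow> lv X sw F (length sw) s)"

definition rootlab :: "letter list \<Rightarrow> nat list \<Rightarrow> (nat \<Rightarrow> cell) \<Rightarrow> nat \<Rightarrow> nat set" where
  "rootlab X sw F s =
     (let rs = roots X sw F; k = length (takeWhile (\<lambda>x. x \<noteq> Some s) rs);
          a = sum_list (map (root_size X sw F) (take k rs)) in
      if Some s \<in> set rs then {a<..a + root_size X sw F (Some s)} else {})"

text \<open>Split of B = C \<union> D with D \<succ> C and |C| = k: C consists of the k smallest elements.\<close>
definition lowpart :: "nat set \<Rightarrow> nat \<Rightarrow> nat set" where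
  "lowpart S k = {x \<in> S. x < Min S + k}"

text \<open>Receiver of the upper part D at a branching tile: rule (I) in a rhombus,
  rule (II) (eastward = along the west-strip) in an alpha square, rule (III)
  (southward = along the north-strip) in a beta square.\<close>
definition Drec :: "letter list \<Rightarrow> nat list \<Rightarrow> (nat \<Rightarrow> cell) \<Rightarrow> nat \<Rightarrow> nat" where
  "Drec X sw F j =
     (if L \<in> (\<lambda>s. X ! s) ` tile_strips X sw j then strip_with X sw j L
      else if F j = Alpha then strip_with X sw j H else strip_with X sw j Z)"

text \<open>labd d: labels on the edges of the path at stage (length sw - d),
  passing labels from the roots towards the southeast boundary.\<close>
primrec labd :: "letter list \<Rightarrow> nat list \<Rightarrow> (nat \<Rightarrow> cell) \<Rightarrow> nat \<Rightarrow> nat \<Rightarrow> nat set" where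
  "labd X sw F 0 = rootlab X sw F"
| "labd X sw F (Suc d) =
     (let j = length sw - Suc d; g = labd X sw F d; f = lv X sw F j in
      if F j = Alpha \<or> F j = Beta then
        (let Bl = g (other X sw j (cutst X sw F j)); dr = Drec X sw F j;
             cr = other X sw j dr; C = lowpart Bl (f cr) in
         g(cr := C, dr := Bl - C))
      else g)"

text \<open>lab j s: label carried by the edge of strip s on the stage-j path
  (stage 0 = southeast boundary).\<close>
definition lab :: "letter list \<Rightarrow> nat list \<Rightarrow> (nat \<Rightarrow> cell) \<Rightarrow> nat \<Rightarrow> nat \<Rightarrow> nat set" where
  "lab X sw F j = labd X sw F (length sw - j)"

end

theory Submission
  imports Defs "HOL-Library.Multiset"
begin

lemma path_Suc:
  "j < length sw \<Longrightarrow> path X sw (Suc j) = swap_at (sw ! j) (path X sw j)"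
  by (simp add: path_def take_Suc_conv_app_nth)

lemma set_swap_at:
  assumes "Suc i < length w" shows "set (swap_at i w) = set w" "length (swap_at i w) = length w"
proof -
  have "mset (swap_at i w) = mset w"
    unfolding swap_at_def using assms mset_swap[of "Suc i" w i] by simp
  then show "set (swap_at i w) = set w" by (metis set_mset_mset)
  show "length (swap_at i w) = length w" by (simp add: swap_at_def)
qed

lemma path_set:
  assumes "is_tiling X sw" "j \<le> length sw"
  shows "set (path X sw j) = {0..<length X} \<and> length (path X sw j) = length X"
  using assms(2)
proof (induction j)
  case 0
  then show ?case by (simp add: path_def)
next
  case (Suc j)
  then have j: "j < length sw" by simp
  have "Suc (sw ! j) < length X" using assms(1) j unfolding is_tiling_def by blast
  then show ?case using Suc j by (simp add: path_Suc set_swap_at)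
qed

lemma tile_facts:
  assumes "is_tiling X sw" "j < length sw"
  shows "tp X sw j \<noteq> tq X sw j" "tp X sw j < length X" "tq X sw j < length X"
proof -
  have a: "Suc (sw ! j) < length X" "rk (X ! tp X sw j) > rk (X ! tq X sw j)"
    using assms unfolding is_tiling_def by blast+
  then show "tp X sw j \<noteq> tq X sw j" by auto
  have p: "set (path X sw j) = {0..<length X}" "length (path X sw j) = length X"
    using path_set[OF assms(1)] assms(2) by auto
  show "tp X sw j < length X" unfolding tp_def using a p
    by (metis Suc_lessD atLeastLessThan_iff nth_mem)
  show "tq X sw j < length X" unfolding tq_def using a p
    by (metis atLeastLessThan_iff nth_mem)
qed

lemma lab_step:
  assumes "j < length sw"
  shows "lab X sw F j = (if F j = Alpha \<or> F j = Beta then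
     (let Bl = lab X sw F (Suc j) (other X sw j (cutst X sw F j)); dr = Drec X sw F j;
          cr = other X sw j dr; C = lowpart Bl (lv X sw F j cr) in
      (lab X sw F (Suc j))(cr := C, dr := Bl - C)) else lab X sw F (Suc j))"
proof -
  have e: "length sw - j = Suc (length sw - Suc j)" using assms by simp
  have e2: "length sw - Suc (length sw - Suc j) = j" using assms by simp
  show ?thesis unfolding lab_def e labd.simps e2 Let_def by simp
qed

lemma lowpart_int: "lowpart {a<..a+k} m = {a<..a + min m k}"
proof (cases "k = 0")
  case True then show ?thesis by (simp add: lowpart_def)
next
  case False
  have "Min {a<..a+k} = Suc a"
    by (rule Min_eqI) (use False in auto)
  then show ?thesis unfolding lowpart_def by auto
qed

lemma other_simps:
  assumes "tp X sw j \<noteq> tq X sw j"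
  shows "other X sw j (tp X sw j) = tq X sw j" "other X sw j (tq X sw j) = tp X sw j"
  using assms by (auto simp: other_def)

lemma strip_with_in: "strip_with X sw j c \<in> {tp X sw j, tq X sw j}"
  by (simp add: strip_with_def)

lemma cutst_in: "cutst X sw F j \<in> {tp X sw j, tq X sw j}"
  by (simp add: cutst_def strip_with_def)

lemma Drec_in: "Drec X sw F j \<in> {tp X sw j, tq X sw j}"
  by (simp add: Drec_def strip_with_def)

lemma lv_Suc_out:
  assumes "s \<notin> {tp X sw j, tq X sw j}" "tp X sw j \<noteq> tq X sw j"
  shows "lv X sw F (Suc j) s = lv X sw F j s"
  using assms cutst_in[of X sw F j] by (auto simp: Let_def other_def)

lemma lab_interval:
  assumes "is_tiling X sw" "j \<le> length sw" "s < length X"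
  shows "\<exists>a. lab X sw F j s = {a<..a + lv X sw F j s}"
  using assms(2,3)
proof (induction "length sw - j" arbitrary: j s)
  case 0
  then have j: "j = length sw" by simp
  let ?N = "length sw"
  have ps: "set (path X sw ?N) = {0..<length X}" using path_set[OF assms(1)] by simp
  show ?case
  proof (cases "Some s \<in> set (roots X sw F)")
    case True
    then show ?thesis unfolding lab_def j by (simp add: rootlab_def Let_def root_size_def) (rule exI, rule refl)
  next
    case False
    have "lv X sw F ?N s = 0"
    proof (rule ccontr)
      assume "lv X sw F ?N s \<noteq> 0"
      moreover have "s \<in> set (path X sw ?N)" using ps 0 by simp
      ultimately show False using False
        by (cases "X ! s") (auto simp: roots_def Let_def)
    qed
    then show ?thesis using False unfolding lab_def j by (simp add: rootlab_def Let_def)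
  qed
next
  case (Suc d)
  then have j: "j < length sw" by simp
  have IH: "\<And>s. s < length X \<Longrightarrow> \<exists>a. lab X sw F (Suc j) s = {a<..a + lv X sw F (Suc j) s}"
  proof -
    have "d = length sw - Suc j" using Suc(2) by simp
    then show "\<And>s. s < length X \<Longrightarrow> \<exists>a. lab X sw F (Suc j) s = {a<..a + lv X sw F (Suc j) s}"
      using Suc(1)[of "Suc j"] j Suc_leI by blast
  qed
  note tf = tile_facts[OF assms(1) j]
  show ?case
  proof (cases "F j = Alpha \<or> F j = Beta")
    case False
    then show ?thesis using IH[OF Suc(4)] lab_step[OF j, of X F] by (simp add: Let_def)
  next
    case br: True
    define c where "c = cutst X sw F j"
    define ot where "ot = other X sw j c"
    define dr where "dr = Drec X sw F j"
    define cr where "cr = other X sw j dr"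
    define f where "f = lv X sw F j"
    have c1: "{ot, c} = {tp X sw j, tq X sw j}" "ot \<noteq> c"
      using cutst_in[of X sw F j] tf(1) unfolding ot_def c_def other_def by auto
    have d1: "{cr, dr} = {tp X sw j, tq X sw j}" "cr \<noteq> dr"
      using Drec_in[of X sw F j] tf(1) unfolding cr_def dr_def other_def by auto
    have lvS: "lv X sw F (Suc j) = f(ot := f ot + f c, c := 0)"
      using br unfolding f_def ot_def c_def by (simp add: Let_def)
    have "ot \<in> {ot, c}" by simp
    then have "ot \<in> {tp X sw j, tq X sw j}" using c1(1) by simp
    then have otl: "ot < length X" using tf by auto
    obtain a where a: "lab X sw F (Suc j) ot = {a<..a + (f ot + f c)}"
      using IH[OF otl] lvS c1(2) by auto
    have sum: "f cr + f dr = f ot + f c" using c1 d1 by (metis add.commute doubleton_eq_iff)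
    have labj: "lab X sw F j = (lab X sw F (Suc j))(cr := lowpart {a<..a + (f ot + f c)} (f cr),
        dr := {a<..a + (f ot + f c)} - lowpart {a<..a + (f ot + f c)} (f cr))"
      using lab_step[OF j, of X F] br a unfolding c_def[symmetric] ot_def[symmetric]
        dr_def[symmetric] cr_def[symmetric] f_def[symmetric] by (simp add: Let_def cr_def)
    have lp: "lowpart {a<..a + (f ot + f c)} (f cr) = {a<..a + f cr}"
      using lowpart_int sum by (metis le_add1 min_absorb1)
    show ?thesis
    proof (cases "s = cr")
      case True
      then show ?thesis using labj lp d1 f_def by auto
    next
      case ncr: False
      show ?thesis
      proof (cases "s = dr")
        case True
        have "{a<..a + (f ot + f c)} - {a<..a + f cr} = {a + f cr<..(a + f cr) + f dr}"
          using sum by auto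
        then show ?thesis using labj lp True ncr f_def by auto
      next
        case False
        then have "s \<notin> {tp X sw j, tq X sw j}" using ncr d1 by auto
        then show ?thesis using labj ncr False IH[OF Suc(4)] lv_Suc_out[OF _ tf(1), of s F]
          by auto
      qed
    qed
  qed
qed

lemma Beta_facts:
  assumes "is_RAT X sw F" "j < length sw" "z \<in> tile_strips X sw j" "X ! z = Z" "F j = Beta"
  shows "cutst X sw F j = other X sw j z \<and> other X sw j (other X sw j z) = z \<and>
         Drec X sw F j = z \<and> other X sw j z \<noteq> z"
proof -
  have tl: "is_tiling X sw" using assms(1) is_RAT_def by blast
  note tf = tile_facts[OF tl assms(2)]
  obtain s where s: "s \<in> tile_strips X sw j" "X ! s = H"
    using assms(1,2,5) unfolding is_RAT_def by blast
  have z: "z = tp X sw j \<or> z = tq X sw j" using assms(3) tile_strips_def by auto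
  have s2: "s = tp X sw j \<or> s = tq X sw j" using s(1) tile_strips_def by auto
  have sz: "s \<noteq> z" using s(2) assms(4) by auto
  have L: "L \<notin> (\<lambda>s. X ! s) ` tile_strips X sw j"
    using z s2 sz s(2) assms(4) unfolding tile_strips_def by auto
  show ?thesis using z s2 sz s(2) assms(4,5) tf(1) L
    unfolding cutst_def strip_with_def other_def Drec_def by auto
qed

lemma lv_pos:
  assumes "is_RAT X sw F" "t < length sw" "z \<in> tile_strips X sw t" "X ! z = Z"
    "\<forall>t'<t. z \<in> tile_strips X sw t' \<longrightarrow> F t' \<noteq> Alpha" "j \<le> t"
  shows "lv X sw F j z \<ge> 1"
  using assms(6)
proof (induction j)
  case 0 then show ?case by simp
next
  case (Suc j)
  have jl: "j < length sw" "j < t" using Suc assms(2) by auto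
  have tl: "is_tiling X sw" using assms(1) is_RAT_def by blast
  note tf = tile_facts[OF tl jl(1)]
  have IH: "lv X sw F j z \<ge> 1" using Suc by simp
  show ?case
  proof (cases "z \<in> tile_strips X sw j")
    case False
    then show ?thesis using lv_Suc_out[OF _ tf(1), of z F] IH unfolding tile_strips_def by auto
  next
    case True
    show ?thesis
    proof (cases "F j = Beta")
      case b: True
      note bf = Beta_facts[OF assms(1) jl(1) True assms(4) b]
      then show ?thesis using IH b by (simp add: Let_def)
    next
      case False
      have "F j \<noteq> Alpha" using assms(5) jl True by blast
      then show ?thesis using False IH by (simp add: Let_def)
    qed
  qed
qed

lemma Max_int: "a < b \<Longrightarrow> Max {a<..(b::nat)} = b"
  by (rule Max_eqI) auto

theorem lemma3p8:
  fixes X :: "letter list" and sw :: "nat list" and F :: "nat \<Rightarrow> cell"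
    and n r t z :: nat and J :: "nat set"
  assumes "X \<in> B n r"
    and "is_RAT X sw F"
    and "t < length sw"
    and "z \<in> tile_strips X sw t"
    and "X ! z = Z"
    and "J = lab X sw F t z"
    and "\<forall>t'<t. z \<in> tile_strips X sw t' \<longrightarrow> F t' \<noteq> Alpha"
  shows "lab X sw F 0 z = {Max J}"
proof -
  have tl: "is_tiling X sw" using assms(2) is_RAT_def by blast
  have zl: "z < length X" using tile_facts[OF tl assms(3)] assms(4) tile_strips_def by auto
  note pos = lv_pos[OF assms(2,3,4,5,7)]
  have inv: "\<exists>b. b + lv X sw F j z = Max J \<and> lab X sw F j z = {b<..Max J}" if "j \<le> t" for j
    using that
  proof (induction "t - j" arbitrary: j)
    case 0
    then have j: "j = t" by simp
    obtain a where a: "lab X sw F t z = {a<..a + lv X sw F t z}"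
      using lab_interval[OF tl _ zl, of t F] assms(3) by auto
    have "Max J = a + lv X sw F t z" using a assms(6) pos[of t] Max_int by simp
    then show ?case using a assms(6) j by auto
  next
    case (Suc d)
    then have jl: "j < t" "j < length sw" using assms(3) by auto
    have "d = t - Suc j" using Suc(2) by simp
    then obtain b where b: "b + lv X sw F (Suc j) z = Max J" "lab X sw F (Suc j) z = {b<..Max J}"
      using Suc(1)[of "Suc j"] jl Suc_leI by blast
    note tf = tile_facts[OF tl jl(2)]
    show ?case
    proof (cases "z \<in> tile_strips X sw j")
      case False
      then have zn: "z \<notin> {tp X sw j, tq X sw j}" unfolding tile_strips_def by auto
      have "lab X sw F j z = lab X sw F (Suc j) z"
        using lab_step[OF jl(2), of X F] Drec_in[of X sw F j] zn tf(1)
        by (auto simp: Let_def other_def)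
      then show ?thesis using b lv_Suc_out[OF zn tf(1), of F] by metis
    next
      case True
      show ?thesis
      proof (cases "F j = Beta")
        case bt: True
        note bf = Beta_facts[OF assms(2) jl(2) True assms(5) bt]
        define h where "h = other X sw j z"
        have lvS: "lv X sw F (Suc j) z = lv X sw F j z + lv X sw F j h"
          using bf bt unfolding h_def by (simp add: Let_def)
        have labj: "lab X sw F j z = lab X sw F (Suc j) z - lowpart (lab X sw F (Suc j) z) (lv X sw F j h)"
          using lab_step[OF jl(2), of X F] bt bf unfolding h_def by (simp add: Let_def)
        have e: "{b<..Max J} = {b<..b + (lv X sw F j h + lv X sw F j z)}" using b(1) lvS by (simp add: add.commute)
        have lp: "lowpart {b<..Max J} (lv X sw F j h) = {b<..b + lv X sw F j h}"
          unfolding e lowpart_int by simp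
        have "lab X sw F j z = {b<..Max J} - {b<..b + lv X sw F j h}"
          using labj b(2) lp by simp
        moreover have "{b<..Max J} - {b<..b + lv X sw F j h} = {b + lv X sw F j h<..Max J}"
          by auto
        ultimately have l: "lab X sw F j z = {b + lv X sw F j h<..Max J}" by simp
        have "(b + lv X sw F j h) + lv X sw F j z = Max J" using b(1) lvS by simp
        then show ?thesis using l by blast
      next
        case False
        have "F j \<noteq> Alpha" using assms(7) jl True by blast
        then show ?thesis using False b lab_step[OF jl(2), of X F] by (simp add: Let_def) (rule exI[of _ b], simp)
      qed
    qed
  qed
  obtain b where "b + lv X sw F 0 z = Max J" "lab X sw F 0 z = {b<..Max J}" using inv[of 0] by auto
  then show ?thesis by auto
qed

end
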